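(* Let $q$ be a nonzero complex number with $q^4\ne1$ and let $\zeta,\zeta'$ be nonzero complex numbers with $\zeta\neq\pm1$, $\zeta'\neq\pm1$, $\zeta\zeta'\neq\pm1$. Then the space of (grading-preserving) $U_q(\mathfrak{sl}(1|1))$-module homomorphisms $V(\zeta)\otimes V(\zeta')\to V(\zeta')\otimes V(\zeta)$ is two-dimensional, spanned by $R_{\zeta,\zeta'}$ and $R'_{\zeta,\zeta'}$, where (with $x,y$ and $x',y'$ the standard bases of $V(\zeta)$, $V(\zeta')$) \[R_{\zeta,\zeta'}:\ x\otimes x'\mapsto x'\otimes x,\ x\otimes y'\mapsto \zeta\, y'\otimes x,\ y\otimes x'\mapsto \zeta' x'\otimes y+(1-\zeta^2)\,y'\otimes x,\ y\otimes y'\mapsto -\zeta\zeta'\, y'\otimes y,\] \[R'_{\zeta,\zeta'}:\ x\otimes x'\mapsto -\zeta\zeta'\,x'\otimes x,\ x\otimes y'\mapsto (1-(\zeta')^2)\,x'\otimes y-\zeta'\,y'\otimes x,\ y\otimes x'\mapsto -\zeta\, x'\otimes y,\ y\otimes y'\mapsto y'\otimes y.\]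
   Context: $[\zeta]=\frac{\zeta-\zeta^{-1}}{q-q^{-1}}$. $U_q(\mathfrak{sl}(1|1))$ is the associative superalgebra generated by odd $E,F$ and even invertible central $W^{\pm1}$ with relations $EF+FE=\frac{W-W^{-1}}{q-q^{-1}}$, $E^2=F^2=0$; it is a Hopf superalgebra with $\Delta(W)=W\otimes W$, $\Delta(E)=E\otimes W^{-1}+1\otimes E$, $\Delta(F)=F\otimes1+W\otimes F$, and tensor products of modules use the sign rule $(a\otimes b)(v\otimes w)=(-1)^{|b||v|}(av\otimes bw)$ for homogeneous elements. For $\zeta\in\mathbb{C}^\times$, $V(\zeta)$ is the $(1|1)$-dimensional module with basis $x$ (even), $y$ (odd) and $Ex=0$, $Fx=y$, $Wx=\zeta x$, $Fy=0$, $Ey=[\zeta]x$, $Wy=\zeta y$. Module homomorphisms are required to preserve the $\mathbb{Z}_2$-grading. *)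

theory Defs
  imports Complex_Main
begin

datatype gen = GE | GF | GW | GWi

definition gen_odd :: "gen \<Rightarrow> bool" where
  "gen_odd g \<longleftrightarrow> g = GE \<or> g = GF"

datatype vb = X | Y

lemma UNIV_vb: "(UNIV :: vb set) = {X, Y}"
  using vb.exhaust by auto

instance vb :: finite
  by standard (simp add: UNIV_vb)

text \<open>A finite-dimensional super module given on a basis: parity of each basis vector
  (True = odd) and, for each generator g, its matrix: entry (j,i) is the coefficient of
  basis vector j in g applied to basis vector i.\<close>
type_synonym 'b smod = "('b \<Rightarrow> bool) \<times> (gen \<Rightarrow> 'b \<Rightarrow> 'b \<Rightarrow> complex)"

definition qbr :: "complex \<Rightarrow> complex \<Rightarrow> complex" where
  "qbr q z = (z - inverse z) / (q - inverse q)"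

definition Vmod :: "complex \<Rightarrow> complex \<Rightarrow> vb smod" where
  "Vmod q z = ((\<lambda>b. b = Y),
     (\<lambda>g j i. case g of
        GE \<Rightarrow> (if j = X \<and> i = Y then qbr q z else 0)
      | GF \<Rightarrow> (if j = Y \<and> i = X then 1 else 0)
      | GW \<Rightarrow> (if j = i then z else 0)
      | GWi \<Rightarrow> (if j = i then inverse z else 0)))"

definition sgn_par :: "bool \<Rightarrow> complex" where
  "sgn_par b = (if b then -1 else 1)"

definition kd :: "'b \<Rightarrow> 'b \<Rightarrow> complex" where
  "kd j i = (if j = i then 1 else 0)"

text \<open>Tensor product of modules, basis (i1,i2) = e_i1 \<otimes> e_i2, parity the sum of parities,
  action through the coproduct
  Delta(W^{\<plusminus>1}) = W^{\<plusminus>1}\<otimes>W^{\<plusminus>1}, Delta(E) = E\<otimes>W^{-1} + 1\<otimes>E, Delta(F) = F\<otimes>1 + W\<otimes>F,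
  with the sign rule (a\<otimes>b)(v\<otimes>w) = (-1)^{|b||v|} (av\<otimes>bw).\<close>
definition tensor_mod :: "'a smod \<Rightarrow> 'b smod \<Rightarrow> ('a \<times> 'b) smod" where
  "tensor_mod A B = (let pa = fst A; a = snd A; pb = fst B; b = snd B in
     ((\<lambda>(i1, i2). pa i1 \<noteq> pb i2),
      (\<lambda>g (j1, j2) (i1, i2). case g of
          GW \<Rightarrow> a GW j1 i1 * b GW j2 i2
        | GWi \<Rightarrow> a GWi j1 i1 * b GWi j2 i2
        | GE \<Rightarrow> a GE j1 i1 * b GWi j2 i2 + sgn_par (pa i1) * kd j1 i1 * b GE j2 i2
        | GF \<Rightarrow> a GF j1 i1 * kd j2 i2 + sgn_par (pa i1) * a GW j1 i1 * b GF j2 i2)))"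

definition matmul :: "('c \<Rightarrow> 'b \<Rightarrow> complex) \<Rightarrow> ('b::finite \<Rightarrow> 'a \<Rightarrow> complex) \<Rightarrow> 'c \<Rightarrow> 'a \<Rightarrow> complex" where
  "matmul P Q = (\<lambda>j i. \<Sum>k\<in>UNIV. P j k * Q k i)"

definition is_hom :: "('a::finite) smod \<Rightarrow> ('b::finite) smod \<Rightarrow> ('b \<Rightarrow> 'a \<Rightarrow> complex) \<Rightarrow> bool" where
  "is_hom A B M \<longleftrightarrow>
     (\<forall>j i. fst B j \<noteq> fst A i \<longrightarrow> M j i = 0) \<and>
     (\<forall>g. matmul M (snd A g) = matmul (snd B g) M)"

text \<open>R and R' as matrices from V(z)\<otimes>V(z') (basis (i1,i2)) to V(z')\<otimes>V(z)
  (basis (j1,j2), i.e. e'_j1 \<otimes> e_j2).\<close>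
definition Rmat :: "complex \<Rightarrow> complex \<Rightarrow> vb \<times> vb \<Rightarrow> vb \<times> vb \<Rightarrow> complex" where
  "Rmat z z' t s =
     (if s = (X, X) then (if t = (X, X) then 1 else 0)
      else if s = (X, Y) then (if t = (Y, X) then z else 0)
      else if s = (Y, X) then (if t = (X, Y) then z' else if t = (Y, X) then 1 - z^2 else 0)
      else (if t = (Y, Y) then - z * z' else 0))"

definition R'mat :: "complex \<Rightarrow> complex \<Rightarrow> vb \<times> vb \<Rightarrow> vb \<times> vb \<Rightarrow> complex" where
  "R'mat z z' t s =
     (if s = (X, X) then (if t = (X, X) then - z * z' else 0)
      else if s = (X, Y) then (if t = (X, Y) then 1 - z'^2 else if t = (Y, X) then - z' else 0)
      else if s = (Y, X) then (if t = (X, Y) then - z else 0)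
      else (if t = (Y, Y) then 1 else 0))"

end

theory Submission imports Defs begin
lemma sum_pairs: "sum f (UNIV :: (vb \<times> vb) set) = f (X,X) + f (X,Y) + f (Y,X) + f (Y,Y)"
proof -
  have u: "(UNIV :: (vb \<times> vb) set) = {(X,X),(X,Y),(Y,X),(Y,Y)}" using UNIV_vb by auto
  show ?thesis unfolding u by (simp add: ac_simps)
qed
lemma all_pair: "(\<forall>v::vb\<times>vb. P v) \<longleftrightarrow> P (X,X) \<and> P (X,Y) \<and> P (Y,X) \<and> P (Y,Y)" 
  by (metis (full_types) vb.exhaust surj_pair)
lemma all_gen: "(\<forall>g. P g) \<longleftrightarrow> P GE \<and> P GF \<and> P GW \<and> P GWi" by (metis gen.exhaust)

lemma hom_facts:
  assumes "is_hom (tensor_mod (Vmod q z) (Vmod q z')) (tensor_mod (Vmod q z') (Vmod q z)) M"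
  shows "M (Y, Y) (Y, X) = 0 \<and> M (Y, Y) (X, Y) = 0 \<and> M (X, X) (X, Y) = 0 \<and> M (Y, X) (X, X) = 0
    \<and> M (X, Y) (Y, Y) = 0 \<and> M (X, Y) (X, X) = 0 \<and> M (X, X) (Y, X) = 0 \<and> M (Y, X) (Y, Y) = 0
    \<and> M (X, X) (Y, Y) = 0 
    \<and> M (Y, X) (X, Y) * z + M (Y, X) (Y, X) = M (X, X) (X, X)
    \<and> M (X, Y) (X, Y) * z + M (X, Y) (Y, X) = z' * M (X, X) (X, X)
    \<and> M (Y, Y) (Y, Y) = M (X, Y) (X, Y) - z' * M (Y, X) (X, Y)
    \<and> M (X, X) (X, X) * qbr q z' =
     qbr q z * M (X, Y) (X, Y) + qbr q z' * inverse z * M (Y, X) (X, Y)"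
  using assms
  unfolding is_hom_def fun_eq_iff matmul_def sum_pairs all_pair all_gen
  by (simp add: tensor_mod_def Vmod_def kd_def sgn_par_def)

lemma YYXX:
  assumes "is_hom (tensor_mod (Vmod q z) (Vmod q z')) (tensor_mod (Vmod q z') (Vmod q z)) M"
   and "qbr q z \<noteq> 0"
  shows "M (Y, Y) (X, X) = 0"
  using assms
  unfolding is_hom_def fun_eq_iff matmul_def sum_pairs all_pair all_gen
  by (simp add: tensor_mod_def Vmod_def kd_def sgn_par_def)

lemma hom_comb:
  assumes "q - inverse q \<noteq> 0" "z \<noteq> 0" "z' \<noteq> 0"
  shows "is_hom (tensor_mod (Vmod q z) (Vmod q z')) (tensor_mod (Vmod q z') (Vmod q z))
     (\<lambda>t s. a * Rmat z z' t s + b * R'mat z z' t s)"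
proof -
  define k where "k = q - inverse q"
  have k: "k \<noteq> 0" using assms k_def by simp
  have qb: "\<And>t. qbr q t = (t - inverse t) / k" unfolding qbr_def k_def by simp
  show ?thesis
  using k assms(2,3)
  unfolding is_hom_def fun_eq_iff matmul_def sum_pairs all_pair all_gen
  apply (simp add: tensor_mod_def Vmod_def kd_def sgn_par_def Rmat_def R'mat_def qb)
  apply (simp add: field_simps power2_eq_square)
  done
qed

lemma hom_sub:
  assumes H: "is_hom (tensor_mod (Vmod q z) (Vmod q z')) (tensor_mod (Vmod q z') (Vmod q z)) M"
    and k: "q - inverse q \<noteq> 0" and z: "z \<noteq> 0" "z' \<noteq> 0" "z\<^sup>2 \<noteq> 1" "z'\<^sup>2 \<noteq> 1"
  shows "\<exists>a b. M = (\<lambda>t s. a * Rmat z z' t s + b * R'mat z z' t s)"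
proof -
  define kk where "kk = q - inverse q"
  have kk: "kk \<noteq> 0" using k kk_def by simp
  have qb: "\<And>t. qbr q t = (t - inverse t) / kk" unfolding qbr_def kk_def by simp
  have qz: "qbr q z \<noteq> 0" using z kk unfolding qb by (simp add: field_simps power2_eq_square)
  note F = hom_facts[OF H] and Z = YYXX[OF H qz]
  define A where "A = M (X,X) (X,X)"
  define D where "D = M (Y,Y) (Y,Y)"
  define e where "e = M (X,Y) (X,Y)"
  define f where "f = M (Y,X) (X,Y)"
  define g where "g = M (X,Y) (Y,X)"
  define h where "h = M (Y,X) (Y,X)"
  define a where "a = h / (1 - z\<^sup>2)"
  define b where "b = e / (1 - z'\<^sup>2)"
  have ha: "h = (1 - z\<^sup>2) * a" unfolding a_def using z by (simp add: field_simps)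
  have eb: "e = (1 - z'\<^sup>2) * b" unfolding b_def using z by (simp add: field_simps)
  have F1: "f * z + h = A" and F2: "e * z + g = z' * A" and F3: "D = e - z' * f"
    using F unfolding A_def D_def e_def f_def g_def h_def by auto
  have E1: "A * qbr q z' = qbr q z * e + qbr q z' * inverse z * f"
    using F unfolding A_def D_def e_def f_def g_def h_def by auto
  have E1': "A * (z'\<^sup>2 - 1) * z = e * (z\<^sup>2 - 1) * z' + (z'\<^sup>2 - 1) * f"
  proof -
    have l: "kk*z*z'*(A * qbr q z') = A * (z'\<^sup>2 - 1) * z"
      using z kk unfolding qb by (simp add: field_simps power2_eq_square)
    have r: "kk*z*z'*(qbr q z * e + qbr q z' * inverse z * f) = e * (z\<^sup>2 - 1) * z' + (z'\<^sup>2 - 1) * f"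
      using z kk unfolding qb by (simp add: field_simps power2_eq_square)
    show ?thesis using E1 l r by metis
  qed
  have "f * ((z'\<^sup>2 - 1) * (z\<^sup>2 - 1)) = e * (z\<^sup>2 - 1) * z' - h * (z'\<^sup>2 - 1) * z"
    using E1' F1 by algebra
  then have "f * ((z'\<^sup>2 - 1) * (z\<^sup>2 - 1)) = (z * a - z' * b) * ((z'\<^sup>2 - 1) * (z\<^sup>2 - 1))"
    unfolding ha eb by algebra
  then have fab: "f = z * a - z' * b" using z by simp
  have Aab: "A = a - z * z' * b" using F1 unfolding fab ha by (simp add: algebra_simps power2_eq_square)
  have gab: "g = z' * a - z * b" using F2 unfolding Aab eb by (simp add: algebra_simps power2_eq_square)
  have Dab: "D = b - z * z' * a" using F3 unfolding fab eb by (simp add: algebra_simps power2_eq_square)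
  have "M = (\<lambda>t s. a * Rmat z z' t s + b * R'mat z z' t s)"
    unfolding fun_eq_iff all_pair
    using F Z Aab Dab fab gab ha eb unfolding A_def D_def e_def f_def g_def h_def
    by (simp add: Rmat_def R'mat_def algebra_simps)
  then show ?thesis by blast
qed

theorem theorem5p1:
  fixes q z z' :: complex
  assumes "q \<noteq> 0" and "q ^ 4 \<noteq> 1"
    and "z \<noteq> 0" and "z' \<noteq> 0"
    and "z \<noteq> 1" and "z \<noteq> -1" and "z' \<noteq> 1" and "z' \<noteq> -1"
    and "z * z' \<noteq> 1" and "z * z' \<noteq> -1"
  shows "{M. is_hom (tensor_mod (Vmod q z) (Vmod q z')) (tensor_mod (Vmod q z') (Vmod q z)) M}
           = {M. \<exists>a b. M = (\<lambda>t s. a * Rmat z z' t s + b * R'mat z z' t s)}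
         \<and> (\<forall>a b. (\<lambda>t s. a * Rmat z z' t s + b * R'mat z z' t s) = (\<lambda>t s. 0) \<longrightarrow> a = 0 \<and> b = 0)"
proof -
  have k: "q - inverse q \<noteq> 0"
  proof
    assume "q - inverse q = 0"
    then have "q * q = 1" using assms(1) by (simp add: field_simps)
    then have "q ^ 4 = 1" by (metis power2_eq_square power_mult one_power2 numeral_Bit0 numeral_One mult_2)
    then show False using assms(2) by simp
  qed
  have z2: "z\<^sup>2 \<noteq> 1" using assms(5,6) by (simp add: power2_eq_1_iff)
  have z2': "z'\<^sup>2 \<noteq> 1" using assms(7,8) by (simp add: power2_eq_1_iff)
  have P1: "{M. is_hom (tensor_mod (Vmod q z) (Vmod q z')) (tensor_mod (Vmod q z') (Vmod q z)) M}
           = {M. \<exists>a b. M = (\<lambda>t s. a * Rmat z z' t s + b * R'mat z z' t s)}"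
    using hom_sub[OF _ k assms(3,4) z2 z2'] hom_comb[OF k assms(3,4)] by blast
  have P2: "a = 0 \<and> b = 0" if h: "(\<lambda>t s. a * Rmat z z' t s + b * R'mat z z' t s) = (\<lambda>t s. 0)" for a b
  proof -
    have "a * (1 - z\<^sup>2) = 0" using fun_cong[OF fun_cong[OF h, of "(Y,X)"], of "(Y,X)"]
      by (simp add: Rmat_def R'mat_def)
    moreover have "b * (1 - z'\<^sup>2) = 0" using fun_cong[OF fun_cong[OF h, of "(X,Y)"], of "(X,Y)"]
      by (simp add: Rmat_def R'mat_def)
    ultimately show ?thesis using z2 z2' by simp
  qed
  show ?thesis using P1 P2 by blast
qed

end
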